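(* Let $X\subseteq\mathbb{C}^n$ be a complex analytic set, $x\in X$, $\mathcal M\subseteq\mathcal O_{X,x}^p$ a submodule and $k\in\mathbb N$. Then, at $(x,x)$: (a) $I_\Delta^{k}\,J_2\big((J_k(\mathcal M))_D\big)\subseteq J_{2k}(\mathcal M_D)$; (b) if $J_k(\mathcal M)$ is a principal ideal, then $I_\Delta^{k-1}\,J_2\big((J_k(\mathcal M))_D\big)\subseteq J_{2k}(\mathcal M_D)$.
   Context: $z_1,\dots,z_n$ are coordinates on $\mathbb C^n$; $\pi_1,\pi_2:X\times X\to X$ are the projections, and $I_\Delta=(z_1\circ\pi_1-z_1\circ\pi_2,\dots,z_n\circ\pi_1-z_n\circ\pi_2)$ is the ideal of the diagonal in $\mathcal O_{X\times X}$. For $h\in\mathcal O_X^q$, $h_D=(h\circ\pi_1,h\circ\pi_2)\in\mathcal O^{2q}_{X\times X}$; for a submodule or ideal $N\subseteq\mathcal O_X^q$, $N_D$ is the submodule of $\mathcal O^{2q}_{X\times X}$ generated by $\{h_D:h\in N\}$. $J_m(N)$ is the ideal generated by the $m\times m$ minors of a matrix of generators of $N$ (so $J_k(\mathcal M)$ is an ideal of $\mathcal O_X$, $(J_k(\mathcal M))_D\subseteq\mathcal O^2_{X\times X}$, and $J_2$ of it is an ideal). *)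

theory Defs
  imports "HOL-Analysis.Analysis"
begin

definition holo_on :: "(complex^'m \<Rightarrow> complex) \<Rightarrow> (complex^'m) set \<Rightarrow> bool" where
  "holo_on F U \<longleftrightarrow> open U \<and>
     (\<forall>z\<in>U. \<exists>c::complex^'m. (F has_derivative (\<lambda>v. \<Sum>i\<in>UNIV. c$i * v$i)) (at z))"

definition holo_at :: "(complex^'m \<Rightarrow> complex) \<Rightarrow> complex^'m \<Rightarrow> bool" where
  "holo_at F a \<longleftrightarrow> (\<exists>U. a \<in> U \<and> holo_on F U)"

definition analytic_set :: "(complex^'n) set \<Rightarrow> bool" where
  "analytic_set X \<longleftrightarrow> (\<exists>\<Omega>. open \<Omega> \<and> X \<subseteq> \<Omega> \<and>
     (\<forall>y\<in>\<Omega>. \<exists>U gs. open U \<and> y \<in> U \<and> U \<subseteq> \<Omega> \<and> (\<forall>g\<in>set gs. holo_on g U) \<and>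
        X \<inter> U = {z\<in>U. \<forall>g\<in>set gs. g z = 0}))"

text \<open>Membership of (a representative of) a germ F in the ideal of O_{A,a} generated
by G: F is holomorphic near a and agrees on A near a with a combination of finitely
many generators with holomorphic coefficients.\<close>
definition in_ideal_at :: "(complex^'m) set \<Rightarrow> complex^'m \<Rightarrow> (complex^'m \<Rightarrow> complex) set
     \<Rightarrow> (complex^'m \<Rightarrow> complex) \<Rightarrow> bool" where
  "in_ideal_at A a G F \<longleftrightarrow> holo_at F a \<and>
     (\<exists>(N::nat) gs cs W. open W \<and> a \<in> W \<and> (\<forall>i<N. gs i \<in> G \<and> holo_at (cs i) a) \<and>
        (\<forall>z\<in>W \<inter> A. F z = (\<Sum>i<N. cs i z * gs i z)))"

definition gen_module :: "complex^'m \<Rightarrow> (complex^'m \<Rightarrow> complex^'q) set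
     \<Rightarrow> (complex^'m \<Rightarrow> complex^'q) set" where
  "gen_module a S = {G. \<exists>(N::nat) hs cs. (\<forall>i<N. hs i \<in> S \<and> holo_at (cs i) a) \<and>
        G = (\<lambda>z. \<Sum>i<N. cs i z *s hs i z)}"

definition detn :: "nat \<Rightarrow> (nat \<Rightarrow> nat \<Rightarrow> complex) \<Rightarrow> complex" where
  "detn k A = (\<Sum>\<sigma> | \<sigma> permutes {..<k}. of_int (sign \<sigma>) * (\<Prod>i<k. A i (\<sigma> i)))"

definition minors :: "nat \<Rightarrow> ('a \<Rightarrow> complex^'q) set \<Rightarrow> ('a \<Rightarrow> complex) set" where
  "minors m S = {(\<lambda>z. detn m (\<lambda>i j. (hs j z) $ (r i))) | hs r. \<forall>j<m. hs j \<in> S}"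

definition Jideal :: "(complex^'m) set \<Rightarrow> complex^'m \<Rightarrow> nat \<Rightarrow> (complex^'m \<Rightarrow> complex^'q) set
     \<Rightarrow> (complex^'m \<Rightarrow> complex) set" where
  "Jideal A a m S = {F. in_ideal_at A a (minors m S) F}"

definition germ_submodule :: "complex^'n \<Rightarrow> (complex^'n \<Rightarrow> complex^'p) set \<Rightarrow> bool" where
  "germ_submodule x M \<longleftrightarrow> (\<forall>h\<in>M. \<forall>i. holo_at (\<lambda>z. h z $ i) x) \<and> (\<lambda>z. 0) \<in> M \<and>
     (\<forall>h\<in>M. \<forall>g\<in>M. (\<lambda>z. h z + g z) \<in> M) \<and>
     (\<forall>c h. holo_at c x \<longrightarrow> h \<in> M \<longrightarrow> (\<lambda>z. c z *s h z) \<in> M)"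

text \<open>C^n x C^n is identified with complex^('n + 'n).\<close>
definition pr1 :: "complex^('n + 'n) \<Rightarrow> complex^'n" where "pr1 z = (\<chi> i. z $ Inl i)"
definition pr2 :: "complex^('n + 'n) \<Rightarrow> complex^'n" where "pr2 z = (\<chi> i. z $ Inr i)"
definition diagpt :: "complex^'n \<Rightarrow> complex^('n + 'n)" where
  "diagpt x = (\<chi> i. case i of Inl j \<Rightarrow> x $ j | Inr j \<Rightarrow> x $ j)"
definition sqset :: "(complex^'n) set \<Rightarrow> (complex^('n + 'n)) set" where
  "sqset X = {z. pr1 z \<in> X \<and> pr2 z \<in> X}"

text \<open>h_D for h in O^p, and for h in O (an element of O^2).\<close>
definition dbl :: "(complex^'n \<Rightarrow> complex^'p) \<Rightarrow> complex^('n + 'n) \<Rightarrow> complex^('p + 'p)" where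
  "dbl h z = (\<chi> i. case i of Inl j \<Rightarrow> h (pr1 z) $ j | Inr j \<Rightarrow> h (pr2 z) $ j)"
definition dblS :: "(complex^'n \<Rightarrow> complex) \<Rightarrow> complex^('n + 'n) \<Rightarrow> complex^2" where
  "dblS h z = (\<chi> i. if i = 1 then h (pr1 z) else h (pr2 z))"

definition modD :: "complex^'n \<Rightarrow> (complex^'n \<Rightarrow> complex^'p) set
     \<Rightarrow> (complex^('n + 'n) \<Rightarrow> complex^('p + 'p)) set" where
  "modD x M = gen_module (diagpt x) (dbl ` M)"
definition idealD :: "complex^'n \<Rightarrow> (complex^'n \<Rightarrow> complex) set
     \<Rightarrow> (complex^('n + 'n) \<Rightarrow> complex^2) set" where
  "idealD x N = gen_module (diagpt x) (dblS ` N)"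

text \<open>Generators of I_Delta^j * I, where I is generated by G.\<close>
definition diag_pow_times :: "nat \<Rightarrow> (complex^('n::finite + 'n) \<Rightarrow> complex) set
     \<Rightarrow> (complex^('n + 'n) \<Rightarrow> complex) set" where
  "diag_pow_times j G = {(\<lambda>z. (\<Prod>l<j. z $ Inl (\<iota> l) - z $ Inr (\<iota> l)) * g z) | \<iota> g. g \<in> G}"

end

theory Submission
  imports Defs "Jordan_Normal_Form.Determinant"
begin

no_notation Matrix.vec_index (infixl \<open>$\<close> 100)


lemma holo_atI:
  assumes "open U" "a \<in> U" "\<And>z. z \<in> U \<Longrightarrow> \<exists>c. (F has_derivative (\<lambda>v. \<Sum>i\<in>UNIV. c$i * v$i)) (at z)"
  shows "holo_at F a"
  using assms unfolding holo_at_def holo_on_def by blast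

lemma holo_atE:
  assumes "holo_at F a"
  obtains U where "open U" "a \<in> U" "\<And>z. z \<in> U \<Longrightarrow> \<exists>c. (F has_derivative (\<lambda>v. \<Sum>i\<in>UNIV. c$i * v$i)) (at z)"
  using assms unfolding holo_at_def holo_on_def by blast

lemma holo_at_const: "holo_at (\<lambda>z. c) a"
  by (rule holo_atI[of UNIV]) (auto intro!: exI[of _ 0])

lemma holo_at_coord: "holo_at (\<lambda>z. z $ i) a"
proof (rule holo_atI[of UNIV], auto)
  have "(\<lambda>v. v $ i) = (\<lambda>v::complex^'a. \<Sum>j\<in>UNIV. (axis i 1 :: complex^'a) $ j * v $ j)"
  proof (rule ext)
    fix v :: "complex^'a"
    have "(\<Sum>j\<in>UNIV. (axis i 1 :: complex^'a) $ j * v $ j) = (\<Sum>j\<in>UNIV. if j = i then v$j else 0)"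
      by (intro sum.cong) (auto simp: axis_def)
    then show "v $ i = (\<Sum>j\<in>UNIV. (axis i 1 :: complex^'a) $ j * v $ j)" by simp
  qed
  moreover have "((\<lambda>z::complex^'a. z $ i) has_derivative (\<lambda>v. v $ i)) (at z)" for z
    by (rule bounded_linear_imp_has_derivative) (rule bounded_linear_vec_nth)
  ultimately show "\<exists>c. ((\<lambda>z::complex^'a. z $ i) has_derivative (\<lambda>v. \<Sum>j\<in>UNIV. c $ j * v $ j)) (at z)" for z
    by metis
qed

lemma holo_at_add:
  assumes "holo_at F a" "holo_at G a" shows "holo_at (\<lambda>z. F z + G z) a"
proof -
  obtain U where U: "open U" "a \<in> U" "\<And>z. z \<in> U \<Longrightarrow> \<exists>c. (F has_derivative (\<lambda>v. \<Sum>i\<in>UNIV. c$i * v$i)) (at z)"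
    using assms(1) unfolding holo_at_def holo_on_def by blast
  obtain V where V: "open V" "a \<in> V" "\<And>z. z \<in> V \<Longrightarrow> \<exists>c. (G has_derivative (\<lambda>v. \<Sum>i\<in>UNIV. c$i * v$i)) (at z)"
    using assms(2) unfolding holo_at_def holo_on_def by blast
  show ?thesis
  proof (rule holo_atI[of "U \<inter> V"])
    fix z assume "z \<in> U \<inter> V"
    then obtain c d where c: "(F has_derivative (\<lambda>v. \<Sum>i\<in>UNIV. c$i * v$i)) (at z)"
      and d: "(G has_derivative (\<lambda>v. \<Sum>i\<in>UNIV. d$i * v$i)) (at z)" using U V by blast
    have "((\<lambda>z. F z + G z) has_derivative (\<lambda>v. (\<Sum>i\<in>UNIV. c$i * v$i) + (\<Sum>i\<in>UNIV. d$i * v$i))) (at z)"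
      by (rule has_derivative_add[OF c d])
    moreover have "(\<lambda>v. (\<Sum>i\<in>UNIV. c$i * v$i) + (\<Sum>i\<in>UNIV. d$i * v$i)) = (\<lambda>v. \<Sum>i\<in>UNIV. (c+d)$i * v$i)"
      by (rule ext) (simp add: sum.distrib[symmetric] distrib_right)
    ultimately show "\<exists>c. ((\<lambda>z. F z + G z) has_derivative (\<lambda>v. \<Sum>i\<in>UNIV. c$i * v$i)) (at z)" by metis
  qed (use U V in auto)
qed

lemma holo_at_mult:
  assumes "holo_at F a" "holo_at G a" shows "holo_at (\<lambda>z. F z * G z) a"
proof -
  obtain U where U: "open U" "a \<in> U" "\<And>z. z \<in> U \<Longrightarrow> \<exists>c. (F has_derivative (\<lambda>v. \<Sum>i\<in>UNIV. c$i * v$i)) (at z)"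
    using assms(1) unfolding holo_at_def holo_on_def by blast
  obtain V where V: "open V" "a \<in> V" "\<And>z. z \<in> V \<Longrightarrow> \<exists>c. (G has_derivative (\<lambda>v. \<Sum>i\<in>UNIV. c$i * v$i)) (at z)"
    using assms(2) unfolding holo_at_def holo_on_def by blast
  show ?thesis
  proof (rule holo_atI[of "U \<inter> V"])
    fix z assume "z \<in> U \<inter> V"
    then obtain c d where c: "(F has_derivative (\<lambda>v. \<Sum>i\<in>UNIV. c$i * v$i)) (at z)"
      and d: "(G has_derivative (\<lambda>v. \<Sum>i\<in>UNIV. d$i * v$i)) (at z)" using U V by blast
    have "((\<lambda>z. F z * G z) has_derivative (\<lambda>v. F z * (\<Sum>i\<in>UNIV. d$i * v$i) + (\<Sum>i\<in>UNIV. c$i * v$i) * G z)) (at z)"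
      by (rule has_derivative_mult[OF c d])
    moreover have "(\<lambda>v. F z * (\<Sum>i\<in>UNIV. d$i * v$i) + (\<Sum>i\<in>UNIV. c$i * v$i) * G z) = (\<lambda>v. \<Sum>i\<in>UNIV. (F z *s d + G z *s c)$i * v$i)"
    proof (rule ext)
      fix v :: "complex^'a"
      have "F z * (\<Sum>i\<in>UNIV. d$i * v$i) + (\<Sum>i\<in>UNIV. c$i * v$i) * G z = (\<Sum>i\<in>UNIV. F z * (d$i * v$i) + c$i * v$i * G z)"
        by (simp add: sum_distrib_left sum_distrib_right sum.distrib)
      also have "\<dots> = (\<Sum>i\<in>UNIV. (F z *s d + G z *s c)$i * v$i)"
        by (intro sum.cong) (simp_all add: algebra_simps)
      finally show "F z * (\<Sum>i\<in>UNIV. d$i * v$i) + (\<Sum>i\<in>UNIV. c$i * v$i) * G z = (\<Sum>i\<in>UNIV. (F z *s d + G z *s c)$i * v$i)" .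
    qed
    ultimately show "\<exists>c. ((\<lambda>z. F z * G z) has_derivative (\<lambda>v. \<Sum>i\<in>UNIV. c$i * v$i)) (at z)" by metis
  qed (use U V in auto)
qed

lemma holo_at_uminus: "holo_at F a \<Longrightarrow> holo_at (\<lambda>z. - F z) a"
  using holo_at_mult[OF holo_at_const[of "-1"], of F a] by simp

lemma holo_at_diff: "holo_at F a \<Longrightarrow> holo_at G a \<Longrightarrow> holo_at (\<lambda>z. F z - G z) a"
proof -
  assume "holo_at F a" "holo_at G a"
  then have "holo_at (\<lambda>z. F z + - G z) a" by (intro holo_at_add holo_at_uminus)
  then show ?thesis by simp
qed

lemma holo_at_sum: "finite I \<Longrightarrow> (\<And>i. i \<in> I \<Longrightarrow> holo_at (F i) a) \<Longrightarrow> holo_at (\<lambda>z. \<Sum>i\<in>I. F i z) a"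
proof (induction I rule: finite_induct)
  case empty then show ?case using holo_at_const[of 0] by simp
next
  case (insert j I) then show ?case using holo_at_add[of "F j" a "\<lambda>z. \<Sum>i\<in>I. F i z"] by simp
qed

lemma holo_at_prod: "finite I \<Longrightarrow> (\<And>i. i \<in> I \<Longrightarrow> holo_at (F i) a) \<Longrightarrow> holo_at (\<lambda>z. \<Prod>i\<in>I. F i z) a"
proof (induction I rule: finite_induct)
  case empty then show ?case using holo_at_const[of 1] by simp
next
  case (insert j I) then show ?case using holo_at_mult[of "F j" a "\<lambda>z. \<Prod>i\<in>I. F i z"] by simp
qed

lemma linear_pr1: "bounded_linear (pr1 :: complex^('n::finite+'n) \<Rightarrow> complex^'n)"
  unfolding linear_conv_bounded_linear[symmetric]
  by (rule linearI) (auto simp: pr1_def Finite_Cartesian_Product.vec_eq_iff)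

lemma linear_pr2: "bounded_linear (pr2 :: complex^('n::finite+'n) \<Rightarrow> complex^'n)"
  unfolding linear_conv_bounded_linear[symmetric]
  by (rule linearI) (auto simp: pr2_def Finite_Cartesian_Product.vec_eq_iff)

lemma holo_at_compose_lin:
  fixes L :: "complex^'m \<Rightarrow> complex^'k"
  assumes L: "bounded_linear L" and f: "holo_at f (L a)"
    and rep: "\<And>c. \<exists>d. \<forall>v. (\<Sum>i\<in>UNIV. c$i * (L v)$i) = (\<Sum>i\<in>UNIV. d$i * v$i)"
  shows "holo_at (\<lambda>z. f (L z)) a"
proof -
  obtain U where U: "open U" "L a \<in> U" "\<And>z. z \<in> U \<Longrightarrow> \<exists>c. (f has_derivative (\<lambda>v. \<Sum>i\<in>UNIV. c$i * v$i)) (at z)"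
    using f unfolding holo_at_def holo_on_def by blast
  show ?thesis
  proof (rule holo_atI[of "L -` U"])
    show "open (L -` U)"
      by (rule continuous_open_vimage[OF U(1)]) (simp add: linear_continuous_at L)
    show "a \<in> L -` U" using U by simp
    fix z assume "z \<in> L -` U"
    then obtain c where c: "(f has_derivative (\<lambda>v. \<Sum>i\<in>UNIV. c$i * v$i)) (at (L z))" using U by blast
    have "((\<lambda>z. f (L z)) has_derivative (\<lambda>v. \<Sum>i\<in>UNIV. c$i * (L v)$i)) (at z)"
      using has_derivative_compose[OF bounded_linear_imp_has_derivative[OF L] c] by (simp add: comp_def)
    moreover obtain d where "(\<lambda>v. \<Sum>i\<in>UNIV. c$i * (L v)$i) = (\<lambda>v. \<Sum>i\<in>UNIV. d$i * v$i)"
      using rep[of c] by blast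
    ultimately show "\<exists>c. ((\<lambda>z. f (L z)) has_derivative (\<lambda>v. \<Sum>i\<in>UNIV. c$i * v$i)) (at z)" by metis
  qed
qed

lemma sum_UNIV_plus: "(\<Sum>j\<in>(UNIV::('a::finite+'b::finite) set). g j) = (\<Sum>i\<in>UNIV. g (Inl i)) + (\<Sum>i\<in>UNIV. g (Inr i))"
  by (subst UNIV_Plus_UNIV[symmetric], subst sum.Plus) (auto simp: comp_def)

lemma holo_at_pr1: "holo_at f (pr1 a) \<Longrightarrow> holo_at (\<lambda>z. f (pr1 z)) a"
proof (rule holo_at_compose_lin[OF linear_pr1])
  fix c :: "complex^'n"
  show "\<exists>d. \<forall>v. (\<Sum>i\<in>UNIV. c$i * (pr1 v)$i) = (\<Sum>i\<in>UNIV. d$i * (v::complex^('n+'n))$i)"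
    by (rule exI[of _ "\<chi> j. case j of Inl i \<Rightarrow> c$i | Inr _ \<Rightarrow> 0"]) (simp add: sum_UNIV_plus pr1_def)
qed

lemma holo_at_pr2: "holo_at f (pr2 a) \<Longrightarrow> holo_at (\<lambda>z. f (pr2 z)) a"
proof (rule holo_at_compose_lin[OF linear_pr2])
  fix c :: "complex^'n"
  show "\<exists>d. \<forall>v. (\<Sum>i\<in>UNIV. c$i * (pr2 v)$i) = (\<Sum>i\<in>UNIV. d$i * (v::complex^('n+'n))$i)"
    by (rule exI[of _ "\<chi> j. case j of Inr i \<Rightarrow> c$i | Inl _ \<Rightarrow> 0"]) (simp add: sum_UNIV_plus pr2_def)
qed

lemma pr1_diag[simp]: "pr1 (diagpt x) = x" and pr2_diag[simp]: "pr2 (diagpt x) = x"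
  by (auto simp: pr1_def pr2_def diagpt_def Finite_Cartesian_Product.vec_eq_iff)



lemma detn_eq_det: "detn k A = Determinant.det (Matrix.mat k k (\<lambda>(i,j). A i j))"
  unfolding detn_def Determinant.det_def
  by (simp add: lessThan_atLeast0)

lemma detn_block:
  assumes "\<And>i j. k \<le> i \<Longrightarrow> i < k+m \<Longrightarrow> j < k \<Longrightarrow> A i j = 0"
  shows "detn (k+m) A = detn k A * detn m (\<lambda>i j. A (k+i) (k+j))"
proof -
  have "Matrix.mat (k+m) (k+m) (\<lambda>(i,j). A i j) =
     four_block_mat (Matrix.mat k k (\<lambda>(i,j). A i j)) (Matrix.mat k m (\<lambda>(i,j). A i (k+j)))
        (0\<^sub>m m k) (Matrix.mat m m (\<lambda>(i,j). A (k+i) (k+j)))"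
    by (rule eq_matI) (auto simp: index_mat_four_block assms)
  then show ?thesis unfolding detn_eq_det
    by (simp only:, subst det_four_block_mat_lower_left_zero[of _ k _ m], auto)
qed

lemma detn_scale_cols: "detn k (\<lambda>i j. c j * A i j) = (\<Prod>j<k. c j) * detn k A"
  unfolding detn_def sum_distrib_left
proof (intro sum.cong refl)
  fix p assume "p \<in> {p. p permutes {..<k}}"
  hence p: "p permutes {..<k}" by simp
  have "(\<Prod>i<k. c (p i) * A i (p i)) = (\<Prod>i<k. c (p i)) * (\<Prod>i<k. A i (p i))"
    by (simp add: prod.distrib)
  moreover have "(\<Prod>i<k. c (p i)) = (\<Prod>j<k. c j)"
    using prod.permute[OF p, of c] by (simp add: comp_def)
  ultimately show "of_int (sign p) * (\<Prod>i<k. c (p i) * A i (p i)) =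
        (\<Prod>j<k. c j) * (of_int (sign p) * (\<Prod>i<k. A i (p i)))" by simp
qed

lemma detn_2: "detn 2 A = A 0 0 * A 1 1 - A 0 1 * A 1 0"
proof -
  have f12: "finite {1::nat}" "0 \<notin> {1::nat}" by auto
  have e: "{..<2::nat} = insert 0 {1}" by auto
  show ?thesis
    unfolding detn_def e
    unfolding sum_over_permutations_insert[OF f12]
    unfolding permutes_sing
    by (simp add: sign_swap_id sign_id swap_id_eq)
qed


lemma in_ideal_holo: "in_ideal_at A a G F \<Longrightarrow> holo_at F a"
  unfolding in_ideal_at_def by blast

lemma in_ideal_gen: "g \<in> G \<Longrightarrow> holo_at g a \<Longrightarrow> in_ideal_at A a G g"
  unfolding in_ideal_at_def
  by (intro conjI exI[of _ "1::nat"] exI[of _ "\<lambda>_. g"] exI[of _ "\<lambda>_ _. 1"] exI[of _ UNIV])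
     (auto intro: holo_at_const)

lemma in_ideal_zero: "in_ideal_at A a G (\<lambda>z. 0)"
  unfolding in_ideal_at_def
  by (intro conjI holo_at_const exI[of _ "0::nat"] exI[of _ UNIV]) auto

lemma sum_split_nat: "(\<Sum>i<m+(n::nat). f i) = (\<Sum>i<m. f i) + (\<Sum>i<n. f (m+i))"
proof (induction n)
  case (Suc n) then show ?case by (simp add: add.assoc)
qed simp

lemma in_ideal_add:
  assumes "in_ideal_at A a G F1" "in_ideal_at A a G F2"
  shows "in_ideal_at A a G (\<lambda>z. F1 z + F2 z)"
proof -
  obtain N1 :: nat and gs1 cs1 W1 where 1: "holo_at F1 a" "open W1" "a \<in> W1" "\<forall>i<N1. gs1 i \<in> G \<and> holo_at (cs1 i) a"
    "\<forall>z\<in>W1 \<inter> A. F1 z = (\<Sum>i<N1. cs1 i z * gs1 i z)" using assms(1) unfolding in_ideal_at_def by blast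
  obtain N2 :: nat and gs2 cs2 W2 where 2: "holo_at F2 a" "open W2" "a \<in> W2" "\<forall>i<N2. gs2 i \<in> G \<and> holo_at (cs2 i) a"
    "\<forall>z\<in>W2 \<inter> A. F2 z = (\<Sum>i<N2. cs2 i z * gs2 i z)" using assms(2) unfolding in_ideal_at_def by blast
  define gs where "gs i = (if i < N1 then gs1 i else gs2 (i - N1))" for i
  define cs where "cs i = (if i < N1 then cs1 i else cs2 (i - N1))" for i
  have h: "holo_at (\<lambda>z. F1 z + F2 z) a" using 1 2 by (intro holo_at_add)
  show ?thesis unfolding in_ideal_at_def
    by (intro conjI h exI[of _ "N1+N2"] exI[of _ gs] exI[of _ cs] exI[of _ "W1 \<inter> W2"])
       (use 1 2 in \<open>auto simp: sum_split_nat gs_def cs_def\<close>)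
qed

lemma in_ideal_mult:
  assumes "holo_at c a" "in_ideal_at A a G F"
  shows "in_ideal_at A a G (\<lambda>z. c z * F z)"
proof -
  obtain N :: nat and gs cs W where 1: "holo_at F a" "open W" "a \<in> W" "\<forall>i<N. gs i \<in> G \<and> holo_at (cs i) a"
    "\<forall>z\<in>W \<inter> A. F z = (\<Sum>i<N. cs i z * gs i z)" using assms(2) unfolding in_ideal_at_def by blast
  have h: "holo_at (\<lambda>z. c z * F z) a" using 1 assms by (intro holo_at_mult)
  show ?thesis unfolding in_ideal_at_def
    by (intro conjI h exI[of _ N] exI[of _ gs] exI[of _ "\<lambda>i z. c z * cs i z"] exI[of _ W])
       (use 1 assms in \<open>auto intro!: holo_at_mult simp: sum_distrib_left mult.assoc\<close>)
qed

lemma in_ideal_cong: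
  assumes "in_ideal_at A a G F" "holo_at F' a" "open V" "a \<in> V" "\<And>z. z \<in> V \<Longrightarrow> z \<in> A \<Longrightarrow> F' z = F z"
  shows "in_ideal_at A a G F'"
proof -
  obtain N :: nat and gs cs W where 1: "holo_at F a" "open W" "a \<in> W" "\<forall>i<N. gs i \<in> G \<and> holo_at (cs i) a"
    "\<forall>z\<in>W \<inter> A. F z = (\<Sum>i<N. cs i z * gs i z)" using assms(1) unfolding in_ideal_at_def by blast
  show ?thesis unfolding in_ideal_at_def
    by (intro conjI assms exI[of _ N] exI[of _ gs] exI[of _ cs] exI[of _ "W \<inter> V"])
       (use 1 assms in auto)
qed

lemma in_ideal_sum:
  "finite I \<Longrightarrow> (\<And>i. i \<in> I \<Longrightarrow> in_ideal_at A a G (F i)) \<Longrightarrow> in_ideal_at A a G (\<lambda>z. \<Sum>i\<in>I. F i z)"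
proof (induction I rule: finite_induct)
  case empty then show ?case using in_ideal_zero by simp
next
  case (insert j I) then show ?case using in_ideal_add[of A a G "F j" "\<lambda>z. \<Sum>i\<in>I. F i z"] by simp
qed

lemma in_ideal_trans:
  assumes "in_ideal_at A a G F" "\<And>g. g \<in> G \<Longrightarrow> in_ideal_at A a G' g"
  shows "in_ideal_at A a G' F"
proof -
  obtain N :: nat and gs cs W where 1: "holo_at F a" "open W" "a \<in> W" "\<forall>i<N. gs i \<in> G \<and> holo_at (cs i) a"
    "\<forall>z\<in>W \<inter> A. F z = (\<Sum>i<N. cs i z * gs i z)" using assms(1) unfolding in_ideal_at_def by blast
  have "in_ideal_at A a G' (\<lambda>z. \<Sum>i<N. cs i z * gs i z)"
    using 1 assms(2) by (intro in_ideal_sum in_ideal_mult) auto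
  then show ?thesis
    by (rule in_ideal_cong[OF _ 1(1) 1(2) 1(3)]) (use 1 in auto)
qed





definition colD :: "(complex^'n \<Rightarrow> complex) \<Rightarrow> (complex^'n \<Rightarrow> complex^'p) \<Rightarrow> complex^('n+'n) \<Rightarrow> complex^('p+'p)" where
  "colD c f z = (\<chi> j. case j of Inl i \<Rightarrow> (c (pr1 z) - c (pr2 z)) * f (pr1 z) $ i | Inr i \<Rightarrow> 0)"

lemma dbl_in_modD: "f \<in> M \<Longrightarrow> dbl f \<in> modD x M"
  unfolding modD_def gen_module_def
  by (intro CollectI exI[of _ "1::nat"] exI[of _ "\<lambda>_. dbl f"] exI[of _ "\<lambda>_ _. 1"]) (auto intro: holo_at_const)

lemma colD_in_modD:
  assumes M: "germ_submodule x M" and c: "holo_at c x" and f: "f \<in> M"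
  shows "colD c f \<in> modD x M"
proof -
  have cf: "(\<lambda>w. c w *s f w) \<in> M" using M c f unfolding germ_submodule_def by blast
  have hc: "holo_at (\<lambda>z. - c (pr2 z)) (diagpt x)"
    by (intro holo_at_uminus holo_at_pr2) (simp add: c)
  show ?thesis
    unfolding modD_def gen_module_def
  proof (intro CollectI exI[of _ "2::nat"] exI[of _ "\<lambda>i::nat. if i = 0 then dbl (\<lambda>w. c w *s f w) else dbl f"]
      exI[of _ "\<lambda>i::nat. if i = 0 then (\<lambda>z. 1) else (\<lambda>z. - c (pr2 z))"] conjI)
    show "\<forall>i<(2::nat). (if i = 0 then dbl (\<lambda>w. c w *s f w) else dbl f) \<in> dbl ` M \<and>
          holo_at (if i = 0 then (\<lambda>z. 1) else (\<lambda>z. - c (pr2 z))) (diagpt x)"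
      using cf f hc by (auto intro: holo_at_const)
  next
    show "colD c f = (\<lambda>z. \<Sum>i<(2::nat). (if i = 0 then (\<lambda>z. 1) else (\<lambda>z. - c (pr2 z))) z *s
                  (if i = 0 then dbl (\<lambda>w. c w *s f w) else dbl f) z)"
    proof (rule ext)
      fix z
      show "colD c f z = (\<Sum>i<(2::nat). (if i = 0 then (\<lambda>z. 1) else (\<lambda>z. - c (pr2 z))) z *s
                  (if i = 0 then dbl (\<lambda>w. c w *s f w) else dbl f) z)"
        unfolding Finite_Cartesian_Product.vec_eq_iff
      proof
        fix j
        show "colD c f z $ j = (\<Sum>i<(2::nat). (if i = 0 then (\<lambda>z. 1) else (\<lambda>z. - c (pr2 z))) z *s
                  (if i = 0 then dbl (\<lambda>w. c w *s f w) else dbl f) z) $ j"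
          by (cases j) (simp_all add: numeral_2_eq_2 colD_def dbl_def algebra_simps)
      qed
    qed
  qed
qed

lemma perm_lt: "p permutes {..<k} \<Longrightarrow> i < (k::nat) \<Longrightarrow> p i < k"
  using permutes_in_image[of p "{..<k}" i] by simp

lemma minorsI: "(\<And>j. j < m \<Longrightarrow> hs j \<in> S) \<Longrightarrow> F = (\<lambda>z. detn m (\<lambda>i j. (hs j z) $ (r i))) \<Longrightarrow> F \<in> minors m S"
  unfolding minors_def by blast

lemma key_minor:
  assumes M: "germ_submodule x M"
    and cc: "\<And>l. l < k \<Longrightarrow> holo_at (cc l) x"
    and f: "\<And>l. l < k \<Longrightarrow> f l \<in> M" and f': "\<And>l. l < k \<Longrightarrow> f' l \<in> M"
  shows "(\<lambda>z. (\<Prod>l<k. cc l (pr1 z) - cc l (pr2 z)) * detn k (\<lambda>i j. f j (pr1 z) $ R i)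
              * detn k (\<lambda>i j. f' j (pr2 z) $ R' i)) \<in> minors (2*k) (modD x M)"
proof (rule minorsI[where hs = "\<lambda>j. if j < k then colD (cc j) (f j) else dbl (f' (j - k))"
        and r = "\<lambda>i. if i < k then Inl (R i) else Inr (R' (i - k))"])
  fix j assume "j < 2*k"
  then show "(if j < k then colD (cc j) (f j) else dbl (f' (j - k))) \<in> modD x M"
    using colD_in_modD[OF M cc f] dbl_in_modD[OF f'[of "j-k"]] by auto
next
  show "(\<lambda>z. (\<Prod>l<k. cc l (pr1 z) - cc l (pr2 z)) * detn k (\<lambda>i j. f j (pr1 z) $ R i)
              * detn k (\<lambda>i j. f' j (pr2 z) $ R' i)) =
    (\<lambda>z. detn (2 * k) (\<lambda>i j. (if j < k then colD (cc j) (f j) else dbl (f' (j - k))) z $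
                     (if i < k then Inl (R i) else Inr (R' (i - k)))))"
  proof (rule ext)
    fix z
    let ?A = "\<lambda>i j. (if j < k then colD (cc j) (f j) else dbl (f' (j - k))) z $
                     (if i < k then Inl (R i) else Inr (R' (i - k)))"
    have "detn (2*k) ?A = detn (k+k) ?A" by (simp add: mult_2)
    also have "\<dots> = detn k ?A * detn k (\<lambda>i j. ?A (k+i) (k+j))"
      by (rule detn_block) (simp add: colD_def)
    also have "detn k ?A = detn k (\<lambda>i j. (cc j (pr1 z) - cc j (pr2 z)) * f j (pr1 z) $ R i)"
      unfolding detn_def
      by (intro sum.cong refl arg_cong2[where f="(*)"] prod.cong) (auto simp: colD_def dest: perm_lt)
    also have "\<dots> = (\<Prod>l<k. cc l (pr1 z) - cc l (pr2 z)) * detn k (\<lambda>i j. f j (pr1 z) $ R i)"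
      by (rule detn_scale_cols)
    also have "detn k (\<lambda>i j. ?A (k+i) (k+j)) = detn k (\<lambda>i j. f' j (pr2 z) $ R' i)"
      by (simp add: dbl_def)
    finally show "(\<Prod>l<k. cc l (pr1 z) - cc l (pr2 z)) * detn k (\<lambda>i j. f j (pr1 z) $ R i)
              * detn k (\<lambda>i j. f' j (pr2 z) $ R' i) = detn (2*k) ?A" by simp
  qed
qed





lemma holo_minor:
  assumes M: "germ_submodule x M" and hs: "\<And>j. j < k \<Longrightarrow> hs j \<in> M"
  shows "holo_at (\<lambda>w. detn k (\<lambda>i j. hs j w $ r i)) x"
  unfolding detn_def
proof (intro holo_at_sum holo_at_mult holo_at_const holo_at_prod)
  fix p i assume "p \<in> {p. p permutes {..<k}}" "i \<in> {..<k}"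
  then have "p i < k" by (auto dest: perm_lt)
  then show "holo_at (\<lambda>w. hs (p i) w $ r i) x"
    using M hs unfolding germ_submodule_def by blast
next
  show "finite {p. p permutes {..<k}}" by (simp add: finite_permutations)
next
  show "finite {..<k}" by blast
qed

lemma holo_pi:
  assumes "\<And>l. l < (k::nat) \<Longrightarrow> holo_at (cc l) x"
  shows "holo_at (\<lambda>z. \<Prod>l<k. cc l (pr1 z) - cc l (pr2 z)) (diagpt x)"
  by (intro holo_at_prod holo_at_diff holo_at_pr1 holo_at_pr2) (auto simp: assms)

lemma open_V: "open W \<Longrightarrow> open W' \<Longrightarrow> open (pr1 -` W \<inter> pr2 -` W')"
  by (intro open_Int continuous_open_vimage) (auto simp: linear_continuous_at linear_pr1 linear_pr2)

lemma in_Jideal_obtain: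
  assumes "h \<in> Jideal X x k M"
  obtains N :: nat and cs hs r W where "holo_at h x" "open W" "x \<in> W"
    "\<And>i. i < N \<Longrightarrow> holo_at (cs i) x" "\<And>i j. i < N \<Longrightarrow> j < k \<Longrightarrow> hs i j \<in> M"
    "\<And>z. z \<in> W \<Longrightarrow> z \<in> X \<Longrightarrow> h z = (\<Sum>i<N. cs i z * detn k (\<lambda>a b. hs i b z $ r i a))"
proof -
  obtain N :: nat and gs cs W where 1: "holo_at h x" "open W" "x \<in> W"
    "\<forall>i<N. gs i \<in> minors k M \<and> holo_at (cs i) x"
    "\<forall>z\<in>W \<inter> X. h z = (\<Sum>i<N. cs i z * gs i z)"
    using assms unfolding Jideal_def in_ideal_at_def by blast
  have "\<forall>i. \<exists>hs r. i < N \<longrightarrow> (gs i = (\<lambda>z. detn k (\<lambda>a b. hs b z $ r a)) \<and> (\<forall>j<k. hs j \<in> M))"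
    using 1(4) unfolding minors_def by blast
  then obtain hs r where hr: "\<And>i. i < N \<Longrightarrow> gs i = (\<lambda>z. detn k (\<lambda>a b. hs i b z $ r i a)) \<and> (\<forall>j<k. hs i j \<in> M)"
    by metis
  show ?thesis
  proof (rule that[where W=W and N=N and cs=cs and hs=hs and r=r])
    show "\<And>z. z \<in> W \<Longrightarrow> z \<in> X \<Longrightarrow> h z = (\<Sum>i<N. cs i z * detn k (\<lambda>a b. hs i b z $ r i a))"
      using 1(5) hr by auto
  qed (use 1 hr in auto)
qed

lemma gen_pair:
  assumes M: "germ_submodule x M"
    and cc: "\<And>l. l < k \<Longrightarrow> holo_at (cc l) x"
    and h: "h \<in> Jideal X x k M" and h': "h' \<in> Jideal X x k M"
  shows "in_ideal_at (sqset X) (diagpt x) (minors (2*k) (modD x M))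
     (\<lambda>z. (\<Prod>l<k. cc l (pr1 z) - cc l (pr2 z)) * h (pr1 z) * h' (pr2 z))"
proof -
  obtain W and N :: nat and cs hs r where 1: "holo_at h x" "open W" "x \<in> W"
    "\<And>i. i < N \<Longrightarrow> holo_at (cs i) x" "\<And>i j. i < N \<Longrightarrow> j < k \<Longrightarrow> hs i j \<in> M"
    "\<And>z. z \<in> W \<Longrightarrow> z \<in> X \<Longrightarrow> h z = (\<Sum>i<N. cs i z * detn k (\<lambda>a b. hs i b z $ r i a))"
    by (rule in_Jideal_obtain[OF h]) blast
  obtain W' and N' :: nat and cs' hs' r' where 2: "holo_at h' x" "open W'" "x \<in> W'"
    "\<And>i. i < N' \<Longrightarrow> holo_at (cs' i) x" "\<And>i j. i < N' \<Longrightarrow> j < k \<Longrightarrow> hs' i j \<in> M"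
    "\<And>z. z \<in> W' \<Longrightarrow> z \<in> X \<Longrightarrow> h' z = (\<Sum>i<N'. cs' i z * detn k (\<lambda>a b. hs' i b z $ r' i a))"
    by (rule in_Jideal_obtain[OF h']) blast
  let ?pi = "\<lambda>z. \<Prod>l<k. cc l (pr1 z) - cc l (pr2 z)"
  let ?K = "\<lambda>i j z. ?pi z * detn k (\<lambda>a b. hs i b (pr1 z) $ r i a) * detn k (\<lambda>a b. hs' j b (pr2 z) $ r' j a)"
  let ?E = "\<lambda>z. \<Sum>i<N. \<Sum>j<N'. (cs i (pr1 z) * cs' j (pr2 z)) * ?K i j z"
  have "in_ideal_at (sqset X) (diagpt x) (minors (2*k) (modD x M)) ?E"
  proof (rule in_ideal_sum, simp)
    fix i assume i: "i \<in> {..<N}"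
    show "in_ideal_at (sqset X) (diagpt x) (minors (2 * k) (modD x M))
            (\<lambda>z. \<Sum>j<N'. cs i (pr1 z) * cs' j (pr2 z) * ?K i j z)"
    proof (rule in_ideal_sum, simp)
      fix j assume j: "j \<in> {..<N'}"
      have hc: "holo_at (\<lambda>z. cs i (pr1 z) * cs' j (pr2 z)) (diagpt x)"
        using 1(4) 2(4) i j by (intro holo_at_mult holo_at_pr1 holo_at_pr2) auto
      have km: "?K i j \<in> minors (2*k) (modD x M)"
        by (rule key_minor[OF M cc]) (use 1(5) 2(5) i j in auto)
      have hm1: "holo_at (\<lambda>w. detn k (\<lambda>a b. hs i b w $ r i a)) x"
        by (rule holo_minor[OF M]) (use 1(5) i in auto)
      have hm2: "holo_at (\<lambda>w. detn k (\<lambda>a b. hs' j b w $ r' j a)) x"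
        by (rule holo_minor[OF M]) (use 2(5) j in auto)
      have hk: "holo_at (?K i j) (diagpt x)"
        by (intro holo_at_mult holo_pi cc holo_at_pr1[where f="\<lambda>w. detn k (\<lambda>a b. hs i b w $ r i a)"]
            holo_at_pr2[where f="\<lambda>w. detn k (\<lambda>a b. hs' j b w $ r' j a)"]) (simp_all add: hm1 hm2)
      show "in_ideal_at (sqset X) (diagpt x) (minors (2 * k) (modD x M)) (\<lambda>z. cs i (pr1 z) * cs' j (pr2 z) * ?K i j z)"
        by (rule in_ideal_mult[OF hc in_ideal_gen[OF km hk]])
    qed
  qed
  then show ?thesis
  proof (rule in_ideal_cong)
    show "holo_at (\<lambda>z. ?pi z * h (pr1 z) * h' (pr2 z)) (diagpt x)"
      by (intro holo_at_mult holo_pi cc holo_at_pr1[where f=h] holo_at_pr2[where f=h']) (simp_all add: 1 2)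
    show "open (pr1 -` W \<inter> pr2 -` W')" using 1 2 by (intro open_V)
    show "diagpt x \<in> pr1 -` W \<inter> pr2 -` W'" using 1 2 by simp
    fix z assume "z \<in> pr1 -` W \<inter> pr2 -` W'" "z \<in> sqset X"
    then have "h (pr1 z) = (\<Sum>i<N. cs i (pr1 z) * detn k (\<lambda>a b. hs i b (pr1 z) $ r i a))"
      "h' (pr2 z) = (\<Sum>j<N'. cs' j (pr2 z) * detn k (\<lambda>a b. hs' j b (pr2 z) $ r' j a))"
      using 1(6) 2(6) by (auto simp: sqset_def)
    then have "?pi z * h (pr1 z) * h' (pr2 z) = ?pi z * ((\<Sum>i<N. cs i (pr1 z) * detn k (\<lambda>a b. hs i b (pr1 z) $ r i a))
        * (\<Sum>j<N'. cs' j (pr2 z) * detn k (\<lambda>a b. hs' j b (pr2 z) $ r' j a)))" by simp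
    also have "\<dots> = (\<Sum>i<N. \<Sum>j<N'. ?pi z * ((cs i (pr1 z) * detn k (\<lambda>a b. hs i b (pr1 z) $ r i a))
        * (cs' j (pr2 z) * detn k (\<lambda>a b. hs' j b (pr2 z) $ r' j a))))"
      unfolding sum_product by (simp only: sum_distrib_left)
    also have "\<dots> = ?E z"
      by (intro sum.cong refl) (simp add: mult_ac)
    finally show "?pi z * h (pr1 z) * h' (pr2 z) = ?E z" .
  qed
qed





lemma bilin:
  fixes c0 c1 p q p' q' :: "nat \<Rightarrow> complex"
  shows "(\<Sum>a<N0. c0 a * p a) * (\<Sum>b<N1. c1 b * q b) - (\<Sum>b<N1. c1 b * p' b) * (\<Sum>a<N0. c0 a * q' a)
    = (\<Sum>a<N0. \<Sum>b<N1. (c0 a * c1 b) * (p a * q b - p' b * q' a))"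
proof -
  have "(\<Sum>b<N1. c1 b * p' b) * (\<Sum>a<N0. c0 a * q' a) = (\<Sum>b<N1. \<Sum>a<N0. (c1 b * p' b) * (c0 a * q' a))"
    by (rule sum_product)
  also have "\<dots> = (\<Sum>a<N0. \<Sum>b<N1. (c1 b * p' b) * (c0 a * q' a))"
    by (rule sum.swap)
  finally have 1: "(\<Sum>b<N1. c1 b * p' b) * (\<Sum>a<N0. c0 a * q' a) = (\<Sum>a<N0. \<Sum>b<N1. (c1 b * p' b) * (c0 a * q' a))" .
  have 2: "(\<Sum>a<N0. c0 a * p a) * (\<Sum>b<N1. c1 b * q b) = (\<Sum>a<N0. \<Sum>b<N1. (c0 a * p a) * (c1 b * q b))"
    by (rule sum_product)
  show ?thesis unfolding 1 2 sum_subtractf[symmetric]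
    by (intro sum.cong refl) (simp add: algebra_simps)
qed

lemma idealD_obtain:
  assumes "G \<in> idealD x J"
  obtains N :: nat and cs h where "\<And>i. i < N \<Longrightarrow> h i \<in> J" "\<And>i. i < N \<Longrightarrow> holo_at (cs i) (diagpt x)"
    "G = (\<lambda>z. \<Sum>i<N. cs i z *s dblS (h i) z)"
proof -
  obtain N :: nat and hs cs where 1: "\<forall>i<N. hs i \<in> dblS ` J \<and> holo_at (cs i) (diagpt x)"
     "G = (\<lambda>z. \<Sum>i<N. cs i z *s hs i z)"
    using assms unfolding idealD_def gen_module_def by blast
  have "\<forall>i. \<exists>h. i < N \<longrightarrow> h \<in> J \<and> hs i = dblS h" using 1(1) by blast
  then obtain h where h: "\<And>i. i < N \<Longrightarrow> h i \<in> J \<and> hs i = dblS (h i)" by metis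
  show ?thesis
  proof (rule that[where N=N and cs=cs and h=h])
    show "G = (\<lambda>z. \<Sum>i<N. cs i z *s dblS (h i) z)"
      unfolding 1(2) using h by (intro ext sum.cong) auto
  qed (use 1 h in auto)
qed

lemma dblS_nth: "dblS h z $ \<rho> = (if \<rho> = 1 then h (pr1 z) else h (pr2 z))"
  by (simp add: dblS_def)

lemma minor2_reduce:
  assumes hpi: "holo_at \<pi> (diagpt x)"
    and Q: "\<And>h h'. h \<in> J \<Longrightarrow> h' \<in> J \<Longrightarrow>
       in_ideal_at S (diagpt x) T (\<lambda>z. \<pi> z * (h (pr1 z) * h' (pr2 z) - h' (pr1 z) * h (pr2 z)))"
    and mu: "\<mu> \<in> minors 2 (idealD x J)"
  shows "in_ideal_at S (diagpt x) T (\<lambda>z. \<pi> z * \<mu> z)"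
proof -
  obtain G r where Gr: "\<And>j. j < 2 \<Longrightarrow> G j \<in> idealD x J" "\<mu> = (\<lambda>z. detn 2 (\<lambda>i j. G j z $ r i))"
    using mu unfolding minors_def by blast
  obtain N0 :: nat and c0 h0 where 0: "\<And>i. i < N0 \<Longrightarrow> h0 i \<in> J" "\<And>i. i < N0 \<Longrightarrow> holo_at (c0 i) (diagpt x)"
    "G 0 = (\<lambda>z. \<Sum>i<N0. c0 i z *s dblS (h0 i) z)"
    by (rule idealD_obtain[OF Gr(1)[of 0]]) (simp, blast)
  obtain N1 :: nat and c1 h1 where 1: "\<And>i. i < N1 \<Longrightarrow> h1 i \<in> J" "\<And>i. i < N1 \<Longrightarrow> holo_at (c1 i) (diagpt x)"
    "G 1 = (\<lambda>z. \<Sum>i<N1. c1 i z *s dblS (h1 i) z)"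
    by (rule idealD_obtain[OF Gr(1)[of 1]]) (simp, blast)
  have Gnth: "G 0 z $ \<rho> = (\<Sum>a<N0. c0 a z * (if \<rho> = 1 then h0 a (pr1 z) else h0 a (pr2 z)))"
     "G 1 z $ \<rho> = (\<Sum>a<N1. c1 a z * (if \<rho> = 1 then h1 a (pr1 z) else h1 a (pr2 z)))" for z \<rho>
    unfolding 0(3) 1(3) by (simp_all add: sum_component dblS_nth)
  have mu2: "\<mu> z = G 0 z $ r 0 * G 1 z $ r 1 - G 1 z $ r 0 * G 0 z $ r 1" for z
    unfolding Gr(2) by (simp add: detn_2)
  have coef: "holo_at (\<lambda>z. c0 a z * c1 b z) (diagpt x)" if "a < N0" "b < N1" for a b
    using 0(2) 1(2) that by (intro holo_at_mult) auto
  consider "r 0 = r 1" | "r 0 = 1" "r 1 \<noteq> 1" | "r 0 \<noteq> 1" "r 1 = 1"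
    using exhaust_2[of "r 0"] exhaust_2[of "r 1"] by metis
  then show ?thesis
  proof cases
    case 1
    have "(\<lambda>z. \<pi> z * \<mu> z) = (\<lambda>z. 0)" by (rule ext) (simp add: mu2 1)
    then show ?thesis by (simp add: in_ideal_zero)
  next
    case 2
    have e: "\<pi> z * \<mu> z = (\<Sum>a<N0. \<Sum>b<N1. (c0 a z * c1 b z) *
        (\<pi> z * (h0 a (pr1 z) * h1 b (pr2 z) - h1 b (pr1 z) * h0 a (pr2 z))))" for z
    proof -
      have "\<mu> z = (\<Sum>a<N0. c0 a z * h0 a (pr1 z)) * (\<Sum>b<N1. c1 b z * h1 b (pr2 z))
          - (\<Sum>b<N1. c1 b z * h1 b (pr1 z)) * (\<Sum>a<N0. c0 a z * h0 a (pr2 z))"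
        unfolding mu2 Gnth using 2 by simp
      then have "\<pi> z * \<mu> z = \<pi> z * (\<Sum>a<N0. \<Sum>b<N1. (c0 a z * c1 b z) *
           (h0 a (pr1 z) * h1 b (pr2 z) - h1 b (pr1 z) * h0 a (pr2 z)))"
        by (simp only: bilin)
      then show ?thesis by (simp add: sum_distrib_left mult_ac)
    qed
    show ?thesis unfolding e
      by (intro in_ideal_sum in_ideal_mult coef Q 0(1) 1(1)) auto
  next
    case 3
    have e: "\<pi> z * \<mu> z = (\<Sum>a<N0. \<Sum>b<N1. (c0 a z * c1 b z) *
        (\<pi> z * (h1 b (pr1 z) * h0 a (pr2 z) - h0 a (pr1 z) * h1 b (pr2 z))))" for z
    proof -
      have "\<mu> z = (\<Sum>a<N0. c0 a z * h0 a (pr2 z)) * (\<Sum>b<N1. c1 b z * h1 b (pr1 z))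
          - (\<Sum>b<N1. c1 b z * h1 b (pr2 z)) * (\<Sum>a<N0. c0 a z * h0 a (pr1 z))"
        unfolding mu2 Gnth using 3 by simp
      then have "\<pi> z * \<mu> z = \<pi> z * (\<Sum>a<N0. \<Sum>b<N1. (c0 a z * c1 b z) *
           (h0 a (pr2 z) * h1 b (pr1 z) - h1 b (pr2 z) * h0 a (pr1 z)))"
        by (simp only: bilin)
      then show ?thesis by (simp add: sum_distrib_left mult_ac)
    qed
    show ?thesis unfolding e
      by (intro in_ideal_sum in_ideal_mult coef Q 0(1) 1(1)) auto
  qed
qed





lemma diag_gen_obtain:
  assumes "g \<in> diag_pow_times j G"
  obtains \<iota> \<mu> where "\<mu> \<in> G" "g = (\<lambda>z. (\<Prod>l<j. (pr1 z) $ \<iota> l - (pr2 z) $ \<iota> l) * \<mu> z)"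
  using assms unfolding diag_pow_times_def by (auto simp: pr1_def pr2_def)

lemma Q_from_pairs:
  assumes "in_ideal_at S a T (\<lambda>z. p z * h (pr1 z) * h' (pr2 z))"
     "in_ideal_at S a T (\<lambda>z. p z * h' (pr1 z) * h (pr2 z))"
  shows "in_ideal_at S a T (\<lambda>z. p z * (h (pr1 z) * h' (pr2 z) - h' (pr1 z) * h (pr2 z)))"
proof -
  have "in_ideal_at S a T (\<lambda>z. p z * h (pr1 z) * h' (pr2 z) + (-1) * (p z * h' (pr1 z) * h (pr2 z)))"
    by (intro in_ideal_add in_ideal_mult holo_at_const assms)
  moreover have "(\<lambda>z. p z * h (pr1 z) * h' (pr2 z) + (-1) * (p z * h' (pr1 z) * h (pr2 z)))
     = (\<lambda>z. p z * (h (pr1 z) * h' (pr2 z) - h' (pr1 z) * h (pr2 z)))"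
    by (rule ext) (simp add: algebra_simps)
  ultimately show ?thesis by simp
qed

lemma holo_coord_pi: "holo_at (\<lambda>z. \<Prod>l<(j::nat). (pr1 z) $ \<iota> l - (pr2 z) $ \<iota> l) (diagpt x)"
  using holo_pi[of j "\<lambda>l w. w $ \<iota> l" x] by (simp add: holo_at_coord)

lemma partA:
  assumes M: "germ_submodule x M"
    and F: "in_ideal_at (sqset X) (diagpt x) (diag_pow_times k (minors 2 (idealD x (Jideal X x k M)))) F"
  shows "F \<in> Jideal (sqset X) (diagpt x) (2 * k) (modD x M)"
  unfolding Jideal_def
proof (rule CollectI, rule in_ideal_trans[OF F])
  fix g assume "g \<in> diag_pow_times k (minors 2 (idealD x (Jideal X x k M)))"
  then obtain \<iota> \<mu> where mu: "\<mu> \<in> minors 2 (idealD x (Jideal X x k M))"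
    and g: "g = (\<lambda>z. (\<Prod>l<k. (pr1 z) $ \<iota> l - (pr2 z) $ \<iota> l) * \<mu> z)"
    by (rule diag_gen_obtain)
  show "in_ideal_at (sqset X) (diagpt x) (minors (2 * k) (modD x M)) g"
    unfolding g
  proof (rule minor2_reduce[OF holo_coord_pi _ mu])
    fix h h' assume h: "h \<in> Jideal X x k M" and h': "h' \<in> Jideal X x k M"
    show "in_ideal_at (sqset X) (diagpt x) (minors (2 * k) (modD x M))
         (\<lambda>z. (\<Prod>l<k. pr1 z $ \<iota> l - pr2 z $ \<iota> l) * (h (pr1 z) * h' (pr2 z) - h' (pr1 z) * h (pr2 z)))"
      by (rule Q_from_pairs; rule gen_pair[OF M _ _ _, of k "\<lambda>l w. w $ \<iota> l", simplified])
         (simp_all add: holo_at_coord h h')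
  qed
qed

lemma principal_obtain:
  assumes "in_ideal_at X x {g} h"
  obtains a W where "holo_at a x" "open W" "x \<in> W" "\<And>z. z \<in> W \<Longrightarrow> z \<in> X \<Longrightarrow> h z = a z * g z"
proof -
  obtain N :: nat and gs cs W where 1: "open W" "x \<in> W" "\<forall>i<N. gs i \<in> {g} \<and> holo_at (cs i) x"
    "\<forall>z\<in>W \<inter> X. h z = (\<Sum>i<N. cs i z * gs i z)"
    using assms unfolding in_ideal_at_def by blast
  show ?thesis
  proof (rule that[where a="\<lambda>z. \<Sum>i<N. cs i z" and W=W])
    show "holo_at (\<lambda>z. \<Sum>i<N. cs i z) x" using 1(3) by (intro holo_at_sum) auto
    fix z assume "z \<in> W" "z \<in> X"
    then show "h z = (\<Sum>i<N. cs i z) * g z" using 1(3,4) by (simp add: sum_distrib_right)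
  qed (use 1 in auto)
qed

lemma partB:
  assumes M: "germ_submodule x M" and g0: "holo_at g0 x"
    and J: "Jideal X x (Suc k) M = {F. in_ideal_at X x {g0} F}"
    and F: "in_ideal_at (sqset X) (diagpt x) (diag_pow_times k (minors 2 (idealD x (Jideal X x (Suc k) M)))) F"
  shows "F \<in> Jideal (sqset X) (diagpt x) (2 * Suc k) (modD x M)"
  unfolding Jideal_def
proof (rule CollectI, rule in_ideal_trans[OF F])
  have g0J: "g0 \<in> Jideal X x (Suc k) M" unfolding J by (simp add: in_ideal_gen g0)
  fix g assume "g \<in> diag_pow_times k (minors 2 (idealD x (Jideal X x (Suc k) M)))"
  then obtain \<iota> \<mu> where mu: "\<mu> \<in> minors 2 (idealD x (Jideal X x (Suc k) M))"
    and g: "g = (\<lambda>z. (\<Prod>l<k. (pr1 z) $ \<iota> l - (pr2 z) $ \<iota> l) * \<mu> z)"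
    by (rule diag_gen_obtain)
  let ?pi = "\<lambda>z. \<Prod>l<k. (pr1 z) $ \<iota> l - (pr2 z) $ \<iota> l"
  let ?T = "minors (2 * Suc k) (modD x M)"
  have I: "in_ideal_at (sqset X) (diagpt x) ?T (\<lambda>z. ?pi z * (a (pr1 z) - a (pr2 z)) * g0 (pr1 z) * g0 (pr2 z))"
    if a: "holo_at a x" for a
  proof -
    define cc where "cc l = (if l < k then (\<lambda>w. w $ \<iota> l) else a)" for l
    have "in_ideal_at (sqset X) (diagpt x) ?T
       (\<lambda>z. (\<Prod>l<Suc k. cc l (pr1 z) - cc l (pr2 z)) * g0 (pr1 z) * g0 (pr2 z))"
      by (rule gen_pair[OF M _ g0J g0J]) (simp add: cc_def holo_at_coord a)
    moreover have "(\<Prod>l<Suc k. cc l (pr1 z) - cc l (pr2 z)) = ?pi z * (a (pr1 z) - a (pr2 z))" for z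
      by (simp add: cc_def)
    ultimately show ?thesis by simp
  qed
  show "in_ideal_at (sqset X) (diagpt x) ?T g"
    unfolding g
  proof (rule minor2_reduce[OF holo_coord_pi _ mu])
    fix h h' assume h: "h \<in> Jideal X x (Suc k) M" and h': "h' \<in> Jideal X x (Suc k) M"
    obtain a Wa where a: "holo_at a x" "open Wa" "x \<in> Wa" "\<And>z. z \<in> Wa \<Longrightarrow> z \<in> X \<Longrightarrow> h z = a z * g0 z"
      using h unfolding J by (auto elim: principal_obtain)
    obtain b Wb where b: "holo_at b x" "open Wb" "x \<in> Wb" "\<And>z. z \<in> Wb \<Longrightarrow> z \<in> X \<Longrightarrow> h' z = b z * g0 z"
      using h' unfolding J by (auto elim: principal_obtain)
    have hh: "holo_at h x" "holo_at h' x" using h h' unfolding J by (auto dest: in_ideal_holo)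
    have "in_ideal_at (sqset X) (diagpt x) ?T
      (\<lambda>z. b (pr2 z) * (?pi z * (a (pr1 z) - a (pr2 z)) * g0 (pr1 z) * g0 (pr2 z))
         + (- a (pr2 z)) * (?pi z * (b (pr1 z) - b (pr2 z)) * g0 (pr1 z) * g0 (pr2 z)))"
    proof -
      have hb: "holo_at (\<lambda>z. b (pr2 z)) (diagpt x)" using b by (intro holo_at_pr2) simp
      have ha: "holo_at (\<lambda>z. - a (pr2 z)) (diagpt x)" using a by (intro holo_at_uminus holo_at_pr2) simp
      show ?thesis by (rule in_ideal_add[OF in_ideal_mult[OF hb I[OF a(1)]] in_ideal_mult[OF ha I[OF b(1)]]])
    qed
    then show "in_ideal_at (sqset X) (diagpt x) ?T
         (\<lambda>z. ?pi z * (h (pr1 z) * h' (pr2 z) - h' (pr1 z) * h (pr2 z)))"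
    proof (rule in_ideal_cong)
      show "holo_at (\<lambda>z. ?pi z * (h (pr1 z) * h' (pr2 z) - h' (pr1 z) * h (pr2 z))) (diagpt x)"
        by (intro holo_at_mult holo_at_diff holo_coord_pi holo_at_pr1[where f=h] holo_at_pr2[where f=h']
              holo_at_pr1[where f=h'] holo_at_pr2[where f=h]) (simp_all add: hh)
      show "open (pr1 -` (Wa \<inter> Wb) \<inter> pr2 -` (Wa \<inter> Wb))" using a b by (intro open_V) auto
      show "diagpt x \<in> pr1 -` (Wa \<inter> Wb) \<inter> pr2 -` (Wa \<inter> Wb)" using a b by simp
      fix z assume "z \<in> pr1 -` (Wa \<inter> Wb) \<inter> pr2 -` (Wa \<inter> Wb)" "z \<in> sqset X"
      then have "h (pr1 z) = a (pr1 z) * g0 (pr1 z)" "h (pr2 z) = a (pr2 z) * g0 (pr2 z)"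
        "h' (pr1 z) = b (pr1 z) * g0 (pr1 z)" "h' (pr2 z) = b (pr2 z) * g0 (pr2 z)"
        using a(4) b(4) by (auto simp: sqset_def)
      then show "?pi z * (h (pr1 z) * h' (pr2 z) - h' (pr1 z) * h (pr2 z)) =
         b (pr2 z) * (?pi z * (a (pr1 z) - a (pr2 z)) * g0 (pr1 z) * g0 (pr2 z))
         + (- a (pr2 z)) * (?pi z * (b (pr1 z) - b (pr2 z)) * g0 (pr1 z) * g0 (pr2 z))"
        by (simp add: algebra_simps)
    qed
  qed
qed

theorem lemmaL4p20:
  fixes X :: "(complex^'n) set" and x :: "complex^'n"
    and M :: "(complex^'n \<Rightarrow> complex^'p) set" and k :: nat
  assumes "analytic_set X" and "x \<in> X" and "germ_submodule x M"
  shows "(\<forall>F. in_ideal_at (sqset X) (diagpt x)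
              (diag_pow_times k (minors 2 (idealD x (Jideal X x k M)))) F
            \<longrightarrow> F \<in> Jideal (sqset X) (diagpt x) (2 * k) (modD x M))
       \<and> ((\<exists>g. holo_at g x \<and> Jideal X x k M = {F. in_ideal_at X x {g} F}) \<longrightarrow>
          (\<forall>F. in_ideal_at (sqset X) (diagpt x)
              (diag_pow_times (k - 1) (minors 2 (idealD x (Jideal X x k M)))) F
            \<longrightarrow> F \<in> Jideal (sqset X) (diagpt x) (2 * k) (modD x M)))"
proof (intro conjI allI impI)
  fix F assume "in_ideal_at (sqset X) (diagpt x) (diag_pow_times k (minors 2 (idealD x (Jideal X x k M)))) F"
  then show "F \<in> Jideal (sqset X) (diagpt x) (2 * k) (modD x M)"
    by (rule partA[OF assms(3)])
next
  fix F assume P: "\<exists>g. holo_at g x \<and> Jideal X x k M = {F. in_ideal_at X x {g} F}"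
    and F: "in_ideal_at (sqset X) (diagpt x) (diag_pow_times (k - 1) (minors 2 (idealD x (Jideal X x k M)))) F"
  show "F \<in> Jideal (sqset X) (diagpt x) (2 * k) (modD x M)"
  proof (cases k)
    case 0
    then show ?thesis using partA[OF assms(3), of X 0 F] F by simp
  next
    case (Suc k')
    obtain g where "holo_at g x" "Jideal X x k M = {F. in_ideal_at X x {g} F}" using P by blast
    then show ?thesis using F partB[OF assms(3), of g X k'] Suc by simp
  qed
qed


end
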